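(* Let $a_i,b_i,a'_i,b'_i\ge 0$ ($i=1,2$), $v_1=(a'_1-a_1,b'_1-b_1)$, $v_2=(a'_2-a_2,b'_2-b_2)$, with $-1<\frac{b'_1-b_1}{a'_1-a_1}<0$ and $\frac{b'_2-b_2}{a'_2-a_2}<-1$. For $\epsilon\in(0,1)$ let $A(\epsilon)\in\mathbb{R}^2_{>0}$ be the intersection point of the curves $x^{a'_1-a_1}y^{b'_1-b_1}=\epsilon^2$ and $x^{a'_2-a_2}y^{b'_2-b_2}=\epsilon^{-2}$, and let $J(\epsilon)$ be the Jacobian matrix at $A(\epsilon)$ of the vector field $$F_\epsilon(x,y)=\big(\epsilon x^{a_1}y^{b_1}-\tfrac1\epsilon x^{a'_1}y^{b'_1}\big)v_1+\big(\tfrac1\epsilon x^{a_2}y^{b_2}-\epsilon x^{a'_2}y^{b'_2}\big)v_2$$ (the system followed by the trajectory from $D(\epsilon)=\{x^{a'_1-a_1}y^{b'_1-b_1}=\epsilon^2\}\cap\{x^{a'_2-a_2}y^{b'_2-b_2}=\epsilon^{2}\}$ to $A(\epsilon)$). Then, as $\epsilon$ varies, $J(\epsilon)$ has equal eigenvalues for at most finitely many values of $\epsilon$.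
   Context: $F_\epsilon$ is the mass-action vector field of the network $a_1X+b_1Y\rightleftharpoons a'_1X+b'_1Y$, $a_2X+b_2Y\rightleftharpoons a'_2X+b'_2Y$ with constant rate constants $k_1=\epsilon,k_2=1/\epsilon,k_3=1/\epsilon,k_4=\epsilon$; $A(\epsilon)$ is its (detailed balanced) positive equilibrium. *)

theory Defs
  imports "HOL-Analysis.Analysis"
begin

text \<open>Mass-action vector field of the network
  a1 X + b1 Y <=> a1' X + b1' Y,  a2 X + b2 Y <=> a2' X + b2' Y
  with rate constants k1 = e, k2 = 1/e, k3 = 1/e, k4 = e.\<close>
definition F_eps ::
  "real \<Rightarrow> real \<Rightarrow> real \<Rightarrow> real \<Rightarrow> real \<Rightarrow> real \<Rightarrow> real \<Rightarrow> real \<Rightarrow> real \<Rightarrow> real^2 \<Rightarrow> real^2" where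
  "F_eps a1 b1 a1' b1' a2 b2 a2' b2' e p =
     (e * (p$1) powr a1 * (p$2) powr b1 - (1/e) * (p$1) powr a1' * (p$2) powr b1')
        *\<^sub>R vector [a1' - a1, b1' - b1]
   + ((1/e) * (p$1) powr a2 * (p$2) powr b2 - e * (p$1) powr a2' * (p$2) powr b2')
        *\<^sub>R vector [a2' - a2, b2' - b2]"

definition jacobian :: "(real^2 \<Rightarrow> real^2) \<Rightarrow> real^2 \<Rightarrow> real^2^2" where
  "jacobian F p = matrix (frechet_derivative F (at p))"

text \<open>A 2x2 real matrix has equal eigenvalues iff its characteristic polynomial
  det(t I - M) is a perfect square (t - lambda)^2 (the double root is necessarily real).\<close>
definition equal_eigenvalues :: "real^2^2 \<Rightarrow> bool" where
  "equal_eigenvalues M \<longleftrightarrow> (\<exists>l::real. \<forall>t::real. det (mat t - M) = (t - l)^2)"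

end

theory Submission imports Defs begin
lemma vn_deriv: "((\<lambda>p::real^2. p $ i) has_derivative (\<lambda>h. h $ i)) F"
  by (rule bounded_linear_imp_has_derivative) (rule bounded_linear_vec_nth)

lemma Fderiv:
  fixes p :: "real^2"
  assumes x: "p$1 > 0" and y: "p$2 > 0" and e: "e \<noteq> 0"
  shows "(F_eps a1 b1 a1' b1' a2 b2 a2' b2' e has_derivative (\<lambda>h.
     (e * ((p$1) powr a1 * (p$2) powr b1) * (a1 * h$1 / p$1 + b1 * h$2 / p$2)
      - (1/e) * ((p$1) powr a1' * (p$2) powr b1') * (a1' * h$1 / p$1 + b1' * h$2 / p$2))
        *\<^sub>R vector [a1' - a1, b1' - b1]
   + ((1/e) * ((p$1) powr a2 * (p$2) powr b2) * (a2 * h$1 / p$1 + b2 * h$2 / p$2)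
      - e * ((p$1) powr a2' * (p$2) powr b2') * (a2' * h$1 / p$1 + b2' * h$2 / p$2))
        *\<^sub>R vector [a2' - a2, b2' - b2])) (at p)"
  unfolding F_eps_def
  apply (rule derivative_eq_intros vn_deriv | simp add: x y)+
  apply (rule ext) apply (simp add: vec_eq_iff forall_2 vector_2 field_simps e)
  done

lemma not_eq_eig:
  fixes M :: "real^2^2"
  assumes "M$1$2 * M$2$1 > 0"
  shows "\<not> equal_eigenvalues M"
proof
  assume "equal_eigenvalues M"
  then obtain l where h: "\<And>t. det (mat t - M) = (t - l)^2" unfolding equal_eigenvalues_def by blast
  have h0: "M$1$1 * M$2$2 - M$1$2 * M$2$1 = l^2" using h[of 0] by (simp add: det_2 mat_def power2_eq_square)
  have h1: "(1 - M$1$1) * (1 - M$2$2) - M$1$2 * M$2$1 = (1-l)^2" using h[of 1] by (simp add: det_2 mat_def)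
  have "M$1$1 + M$2$2 = 2*l" using h0 h1 by (simp add: algebra_simps power2_eq_square)
  moreover have "(M$1$1 - M$2$2)^2 = (M$1$1 + M$2$2)^2 - 4 * (M$1$1 * M$2$2)" by (simp add: power2_eq_square algebra_simps)
  ultimately have "(M$1$1 - M$2$2)^2 = - 4 * (M$1$2 * M$2$1)" using h0 by (simp add: power2_eq_square algebra_simps)
  then show False using assms by (smt (verit) zero_le_power2)
qed

theorem proposition4p9:
  fixes a1 b1 a1' b1' a2 b2 a2' b2' :: real
    and A :: "real \<Rightarrow> real^2"
  assumes nonneg: "a1 \<ge> 0" "b1 \<ge> 0" "a1' \<ge> 0" "b1' \<ge> 0"
                  "a2 \<ge> 0" "b2 \<ge> 0" "a2' \<ge> 0" "b2' \<ge> 0"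
    and slope1: "-1 < (b1' - b1) / (a1' - a1)" "(b1' - b1) / (a1' - a1) < 0"
    and slope2: "(b2' - b2) / (a2' - a2) < -1"
    and A_pos: "\<And>e. 0 < e \<Longrightarrow> e < 1 \<Longrightarrow> A e $ 1 > 0 \<and> A e $ 2 > 0"
    and A_curve1: "\<And>e. 0 < e \<Longrightarrow> e < 1 \<Longrightarrow>
        (A e $ 1) powr (a1' - a1) * (A e $ 2) powr (b1' - b1) = e^2"
    and A_curve2: "\<And>e. 0 < e \<Longrightarrow> e < 1 \<Longrightarrow>
        (A e $ 1) powr (a2' - a2) * (A e $ 2) powr (b2' - b2) = 1 / e^2"
  shows "finite {e \<in> {0<..<1}.
           equal_eigenvalues (jacobian (F_eps a1 b1 a1' b1' a2 b2 a2' b2' e) (A e))}"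
proof -
  have uw: "(a1' - a1) * (b1' - b1) < 0"
    using slope1(2) by (auto simp add: divide_less_0_iff mult_less_0_iff) 
  have pq: "(a2' - a2) * (b2' - b2) < 0"
    using slope2 by (smt (verit) divide_less_0_iff mult_less_0_iff) 
  have "{e \<in> {0<..<1}.
           equal_eigenvalues (jacobian (F_eps a1 b1 a1' b1' a2 b2 a2' b2' e) (A e))} = {}"
  proof (rule ccontr)
    assume "\<not> ?thesis"
    then obtain e where e: "0 < e" "e < 1"
      and eq: "equal_eigenvalues (jacobian (F_eps a1 b1 a1' b1' a2 b2 a2' b2' e) (A e))" by auto
    define x where "x = A e $ 1"
    define y where "y = A e $ 2"
    have x: "x > 0" and y: "y > 0" using A_pos[OF e] x_def y_def by auto
    define X1 where "X1 = x powr a1 * y powr b1"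
    define X2 where "X2 = x powr a2 * y powr b2"
    have X1p: "X1 > 0" and X2p: "X2 > 0" using x y by (auto simp: X1_def X2_def)
    have X1': "x powr a1' * y powr b1' = X1 * e^2"
    proof -
      have "x powr a1' * y powr b1' = X1 * (x powr (a1' - a1) * y powr (b1' - b1))"
        unfolding X1_def by (simp add: powr_diff x y field_simps)
      then show ?thesis using A_curve1[OF e] x_def y_def by simp
    qed
    have X2': "x powr a2' * y powr b2' = X2 / e^2"
    proof -
      have "x powr a2' * y powr b2' = X2 * (x powr (a2' - a2) * y powr (b2' - b2))"
        unfolding X2_def by (simp add: powr_diff x y field_simps)
      then show ?thesis using A_curve2[OF e] x_def y_def by simp
    qed
    have D: "(F_eps a1 b1 a1' b1' a2 b2 a2' b2' e has_derivative (\<lambda>h.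
     (e * X1 * (a1 * h$1 / x + b1 * h$2 / y)
      - (1/e) * (X1 * e^2) * (a1' * h$1 / x + b1' * h$2 / y))
        *\<^sub>R vector [a1' - a1, b1' - b1]
   + ((1/e) * X2 * (a2 * h$1 / x + b2 * h$2 / y)
      - e * (X2 / e^2) * (a2' * h$1 / x + b2' * h$2 / y))
        *\<^sub>R vector [a2' - a2, b2' - b2])) (at (A e))" (is "(_ has_derivative ?L) _")
      using Fderiv[of "A e" e a1 b1 a1' b1' a2 b2 a2' b2'] x y e
      unfolding x_def[symmetric] y_def[symmetric] X1_def[symmetric] X2_def[symmetric] X1' X2'
      by simp
    define K where "K = e * X1 * ((a1' - a1) * (b1' - b1)) + X2 / e * ((a2' - a2) * (b2' - b2))"
    have Kneg: "K < 0" unfolding K_def using uw pq X1p X2p e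
      by (smt (verit) divide_pos_pos mult_pos_pos mult_neg_pos mult_pos_neg)
    have J: "jacobian (F_eps a1 b1 a1' b1' a2 b2 a2' b2' e) (A e) = matrix ?L"
      unfolding jacobian_def using frechet_derivative_at[OF D] by simp
    have m12: "matrix ?L $ 1 $ 2 = - K / y"
      unfolding matrix_def K_def using e x y by (simp add: axis_def vector_2 field_simps power2_eq_square)
    have m21: "matrix ?L $ 2 $ 1 = - K / x"
      unfolding matrix_def K_def using e x y by (simp add: axis_def vector_2 field_simps power2_eq_square)
    have "matrix ?L $ 1 $ 2 * matrix ?L $ 2 $ 1 > 0"
      unfolding m12 m21 using Kneg x y by (simp add: zero_less_mult_iff divide_less_0_iff)
    then show False using not_eq_eig eq J by metis
  qed
  then show ?thesis by (metis finite.emptyI)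
qed

end
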